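(* Let $(V,\langle\cdot\,,\cdot\rangle_V)$ be an admissible integral $\mathrm{Cl}_{r,s}$-module and $(U,\langle\cdot\,,\cdot\rangle_U)$ an admissible integral $\mathrm{Cl}_{4,4}$-module such that the representations $J_{y_j}\in\mathrm{End}(U)$ permute the integral basis of $U$ up to sign for all orthonormal generators $y_j$ of $\mathrm{Cl}_{4,4}$. Then $V\otimes U$ with the scalar product $\langle v\otimes u,v'\otimes u'\rangle=\langle v,v'\rangle_V\langle u,u'\rangle_U$ is (carries the structure of) an admissible integral $\mathrm{Cl}_{r+4,s+4}$-module.
   Context: A scalar product is a real symmetric non-degenerate bilinear form. $\mathrm{Cl}_{p,q}$ is the real Clifford algebra generated by $\mathbb R^{p,q}$ ($\mathbb R^{p+q}$ with quadratic form $x_1^2+\dots+x_p^2-x_{p+1}^2-\dots-x_{p+q}^2$) with relation $z^2=-\langle z,z\rangle\cdot1$; orthonormal generators $z_k$ satisfy $\langle z_k,z_l\rangle=0$ ($k\ne l$), $\langle z_k,z_k\rangle=\pm1$. A $\mathrm{Cl}_{p,q}$-module $V$ with representation $J$ is admissible if it carries a scalar product with $\langle J_zu,v\rangle_V=-\langle u,J_zv\rangle_V$ for all $z,u,v$; it is an admissible integral module if it has an integral basis, i.e. a basis $\{v_\alpha\}$ with $\langle v_\alpha,v_\beta\rangle_V=0$ ($\alpha\ne\beta$), $\langle v_\alpha,v_\alpha\rangle_V=\pm1$, and $\langle J_{z_k}v_\alpha,v_\beta\rangle_V\in\{1,-1,0\}$ for all orthonormal generators $z_k$ and all $\alpha,\beta$.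 An operator permutes a basis up to sign if it sends each basis vector to $\pm$ some basis vector. *)

theory Defs
  imports "HOL-Analysis.Analysis"
begin

text \<open>Finite-dimensional real modules are modelled concretely as coordinate spaces
  real^'n.\<close>

definition gen_norm :: "nat \<Rightarrow> nat \<Rightarrow> real" where
  "gen_norm p k = (if k < p then 1 else -1)"

definition scalar_product :: "('v::real_vector \<Rightarrow> 'v \<Rightarrow> real) \<Rightarrow> bool" where
  "scalar_product g \<longleftrightarrow> bilinear g \<and> (\<forall>u v. g u v = g v u)
     \<and> (\<forall>u. (\<forall>v. g u v = 0) \<longrightarrow> u = 0)"

text \<open>A representation of Cl_{p,q} on V, given by the images J k of the orthonormal
  generators z_k: linear maps with J_z J_z = - <z,z> Id and anticommuting for
  distinct generators (this is exactly an algebra homomorphism Cl_{p,q} -> End V,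
  by the universal property of the Clifford algebra).\<close>
definition clifford_rep :: "nat \<Rightarrow> nat \<Rightarrow> (nat \<Rightarrow> 'v::real_vector \<Rightarrow> 'v) \<Rightarrow> bool" where
  "clifford_rep p q J \<longleftrightarrow>
     (\<forall>k<p+q. linear (J k)) \<and>
     (\<forall>k<p+q. \<forall>v. J k (J k v) = - (gen_norm p k *\<^sub>R v)) \<and>
     (\<forall>k<p+q. \<forall>l<p+q. k \<noteq> l \<longrightarrow> (\<forall>v. J k (J l v) = - J l (J k v)))"

definition admissible :: "nat \<Rightarrow> nat \<Rightarrow> (nat \<Rightarrow> 'v::real_vector \<Rightarrow> 'v) \<Rightarrow> ('v \<Rightarrow> 'v \<Rightarrow> real) \<Rightarrow> bool" where
  "admissible p q J g \<longleftrightarrow> clifford_rep p q J \<and> scalar_product g \<and>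
     (\<forall>k<p+q. \<forall>u v. g (J k u) v = - g u (J k v))"

definition integral_basis :: "nat \<Rightarrow> nat \<Rightarrow> (nat \<Rightarrow> 'v::real_vector \<Rightarrow> 'v) \<Rightarrow> ('v \<Rightarrow> 'v \<Rightarrow> real) \<Rightarrow> 'v set \<Rightarrow> bool" where
  "integral_basis p q J g B \<longleftrightarrow> independent B \<and> span B = UNIV \<and>
     (\<forall>a\<in>B. \<forall>b\<in>B. a \<noteq> b \<longrightarrow> g a b = 0) \<and>
     (\<forall>a\<in>B. g a a = 1 \<or> g a a = -1) \<and>
     (\<forall>k<p+q. \<forall>a\<in>B. \<forall>b\<in>B. g (J k a) b \<in> {1, -1, 0})"

definition admissible_integral :: "nat \<Rightarrow> nat \<Rightarrow> (nat \<Rightarrow> 'v::real_vector \<Rightarrow> 'v) \<Rightarrow> ('v \<Rightarrow> 'v \<Rightarrow> real) \<Rightarrow> bool" where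
  "admissible_integral p q J g \<longleftrightarrow> admissible p q J g \<and> (\<exists>B. integral_basis p q J g B)"

definition permutes_up_to_sign :: "('v::real_vector \<Rightarrow> 'v) \<Rightarrow> 'v set \<Rightarrow> bool" where
  "permutes_up_to_sign A B \<longleftrightarrow> (\<forall>a\<in>B. \<exists>b\<in>B. A a = b \<or> A a = - b)"

text \<open>Tensor product of coordinate spaces: real^'n \<otimes> real^'m = real^('n \<times> 'm).\<close>
definition tensor :: "real^'n \<Rightarrow> real^'m \<Rightarrow> real^('n \<times> 'm)" where
  "tensor v u = (\<chi> ij. v $ fst ij * u $ snd ij)"

end

theory Submission imports Defs begin

lemma tensor_axis: "axis (i,j) (1::real) = tensor (axis i 1) (axis j 1)"
  by (auto simp: vec_eq_iff axis_def tensor_def)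

lemma tensor_span: "span {tensor v u | v u. True} = UNIV"
proof -
  have "Basis \<subseteq> {tensor v u | v u. True}"
    by (fastforce simp: Basis_vec_def tensor_axis)
  hence "span Basis \<subseteq> span {tensor v u | v u. True}" by (rule span_mono)
  thus ?thesis by (auto simp: span_Basis)
qed

lemma linear_eq_tensor:
  fixes f h :: "real^('n::finite \<times> 'm::finite) \<Rightarrow> 'a::real_vector"
  assumes "linear f" "linear h" "\<And>v u. f (tensor v u) = h (tensor v u)"
  shows "f = h"
proof
  fix x show "f x = h x"
    by (rule linear_eq_on_span[OF assms(1,2), of "{tensor v u | v u. True}"])
       (use assms(3) tensor_span in auto)
qed

lemma bilinear_eq_tensor:
  fixes f h :: "real^('n::finite \<times> 'm::finite) \<Rightarrow> real^('n \<times> 'm) \<Rightarrow> real"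
  assumes "bilinear f" "bilinear h" "\<And>v u v' u'. f (tensor v u) (tensor v' u') = h (tensor v u) (tensor v' u')"
  shows "f = h"
proof (intro ext)
  fix x y show "f x y = h x y"
    by (rule bilinear_eq[OF assms(1,2), of UNIV "{tensor v u | v u. True}" UNIV "{tensor v u | v u. True}"])
      (use assms(3) tensor_span in auto)
qed

lemma tensor_scaleL: "tensor (c *\<^sub>R v) u = c *\<^sub>R tensor v u"
  by (simp add: vec_eq_iff tensor_def)
lemma tensor_scaleR: "tensor v (c *\<^sub>R u) = c *\<^sub>R tensor v u"
  by (simp add: vec_eq_iff tensor_def)
lemma tensor_negL: "tensor (- v) u = - tensor v u"
  by (simp add: vec_eq_iff tensor_def)
lemma tensor_negR: "tensor v (- u) = - tensor v u"
  by (simp add: vec_eq_iff tensor_def)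
lemma tensor_addL: "tensor (v + w) u = tensor v u + tensor w u"
  by (simp add: vec_eq_iff tensor_def algebra_simps)
lemma tensor_addR: "tensor v (u + w) = tensor v u + tensor v w"
  by (simp add: vec_eq_iff tensor_def algebra_simps)

definition tmap :: "(real^'n \<Rightarrow> real^'n) \<Rightarrow> (real^'m \<Rightarrow> real^'m) \<Rightarrow> real^('n::finite\<times>'m::finite) \<Rightarrow> real^('n\<times>'m)" where
  "tmap A C x = (\<chi> ij. \<Sum>k\<in>UNIV. \<Sum>l\<in>UNIV. matrix A $ fst ij $ k * matrix C $ snd ij $ l * x $ (k,l))"

lemma linear_tmap: "linear (tmap A C)"
  by (rule linearI) (simp_all add: tmap_def vec_eq_iff algebra_simps sum.distrib sum_distrib_left)

lemma tmap_tensor: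
  assumes "linear A" "linear C"
  shows "tmap A C (tensor v u) = tensor (A v) (C u)"
proof -
  have A: "A v = matrix A *v v" and C: "C u = matrix C *v u"
    using assms by (simp_all add: matrix_works)
  show ?thesis
    unfolding A C by (simp add: tmap_def tensor_def vec_eq_iff matrix_vector_mult_def sum_product mult_ac)
qed

lemma bil_lsum:
  assumes "bilinear g" shows "g (\<Sum>a\<in>t. r a *\<^sub>R a) y = (\<Sum>a\<in>t. r a * g a y)"
proof -
  interpret l: linear "\<lambda>x. g x y" using assms by (simp add: bilinear_def)
  show ?thesis by (simp add: l.sum l.scale)
qed

lemma ortho_independent:
  fixes g :: "'a::real_vector \<Rightarrow> 'a \<Rightarrow> real"
  assumes bg: "bilinear g" and orth: "\<forall>a\<in>B. \<forall>b\<in>B. a \<noteq> b \<longrightarrow> g a b = 0"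
    and nz: "\<forall>a\<in>B. g a a \<noteq> 0"
  shows "independent B"
proof
  assume "dependent B"
  then obtain t u v0 where t: "finite t" "t \<subseteq> B" "(\<Sum>v\<in>t. u v *\<^sub>R v) = 0" and v0: "v0 \<in> t" "u v0 \<noteq> 0"
    unfolding real_vector.dependent_explicit by blast
  have "0 = g (\<Sum>v\<in>t. u v *\<^sub>R v) v0" unfolding t(3) by (rule bilinear_lzero[OF bg, symmetric])
  also have "\<dots> = (\<Sum>v\<in>t. u v * g v v0)" by (rule bil_lsum[OF bg])
  also have "\<dots> = u v0 * g v0 v0"
  proof -
    have "(\<Sum>v\<in>t - {v0}. u v * g v v0) = 0"
      by (rule sum.neutral) (use t(2) orth v0(1) in \<open>auto\<close>)
    thus ?thesis by (simp add: sum.remove[OF t(1) v0(1)])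
  qed
  finally show False using v0 nz t by auto
qed

lemma ortho_nondeg:
  fixes g :: "'a::real_vector \<Rightarrow> 'a \<Rightarrow> real"
  assumes bg: "bilinear g" and orth: "\<forall>a\<in>B. \<forall>b\<in>B. a \<noteq> b \<longrightarrow> g a b = 0"
    and nz: "\<forall>a\<in>B. g a a \<noteq> 0" and sp: "span B = UNIV"
    and z: "\<forall>v. g x v = 0"
  shows "x = 0"
proof -
  have "x \<in> span B" using sp by auto
  then obtain t r where t: "finite t" "t \<subseteq> B" and x: "x = (\<Sum>a\<in>t. r a *\<^sub>R a)"
    unfolding real_vector.span_explicit by blast
  have "r b = 0" if b: "b \<in> t" for b
  proof -
    have "0 = g x b" using z by simp
    also have "\<dots> = (\<Sum>v\<in>t. r v * g v b)" unfolding x by (rule bil_lsum[OF bg])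
    also have "\<dots> = r b * g b b"
    proof -
      have "(\<Sum>v\<in>t - {b}. r v * g v b) = 0"
        by (rule sum.neutral) (use t(2) orth b in \<open>auto\<close>)
      thus ?thesis by (simp add: sum.remove[OF t(1) b])
    qed
    finally show ?thesis using nz b t by auto
  qed
  thus ?thesis unfolding x by simp
qed

lemma sym_span:
  fixes g :: "'a::real_vector \<Rightarrow> 'a \<Rightarrow> real"
  assumes bg: "bilinear g" and s: "\<forall>a\<in>B. \<forall>b\<in>B. g a b = g b a" and sp: "span B = UNIV"
  shows "g x y = g y x"
proof -
  have b2: "bilinear (\<lambda>x y. g y x)" using bg by (simp add: bilinear_def)
  show ?thesis
  proof (rule bilinear_eq[OF bg b2, of UNIV B UNIV B])
    show "UNIV \<subseteq> span B" using sp by simp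
    show "UNIV \<subseteq> span B" using sp by simp
    fix a b assume "a\<in>B" "b\<in>B" thus "g a b = g b a" using s by blast
  qed simp_all
qed

lemma cl_neg: assumes "clifford_rep p q J" "k < p+q" shows "J k (- v) = - J k v"
proof -
  have "linear (J k)" using assms unfolding clifford_rep_def by blast
  thus ?thesis by (rule linear_neg)
qed
lemma cl_anti: assumes "clifford_rep p q J" "k < p+q" "l < k" shows "J k (J l v) = - J l (J k v)"
proof -
  have "\<forall>k<p+q. \<forall>l<p+q. k \<noteq> l \<longrightarrow> (\<forall>v. J k (J l v) = - J l (J k v))"
    using assms(1) unfolding clifford_rep_def by (elim conjE)
  moreover have "l < p+q" "k \<noteq> l" using assms by auto
  ultimately show ?thesis using assms(2) by blast
qed
lemma cl_sq: assumes "clifford_rep p q J" "k < p+q" shows "J k (J k v) = (if k < p then - v else v)"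
proof -
  have "\<forall>k<p+q. \<forall>v. J k (J k v) = - (gen_norm p k *\<^sub>R v)"
    using assms(1) unfolding clifford_rep_def by (elim conjE)
  thus ?thesis using assms(2) by (simp add: gen_norm_def)
qed
definition Om :: "(nat \<Rightarrow> 'v \<Rightarrow> 'v) \<Rightarrow> 'v \<Rightarrow> 'v" where
  "Om J u = J 0 (J 1 (J 2 (J 3 (J 4 (J 5 (J 6 (J 7 u)))))))"

lemma Om_sq:
  assumes cl: "clifford_rep 4 4 J" shows "Om J (Om J u) = u"
  unfolding Om_def by (simp add: cl_neg[OF cl] cl_anti[OF cl] cl_sq[OF cl])

lemma Om_anti:
  assumes cl: "clifford_rep 4 4 J" and j: "j < 8" shows "Om J (J j u) = - J j (Om J u)"
proof -
  have "j=0 \<or> j=1 \<or> j=2 \<or> j=3 \<or> j=4 \<or> j=5 \<or> j=6 \<or> j=7" using j by auto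
  thus ?thesis unfolding Om_def by (elim disjE) (simp_all add: cl_neg[OF cl] cl_anti[OF cl] cl_sq[OF cl])
qed

lemma Om_linear:
  assumes cl: "clifford_rep 4 4 J" shows "linear (Om J)"
proof -
  have l: "\<And>k. k < 4+4 \<Longrightarrow> linear (J k)" using cl unfolding clifford_rep_def by blast
  have "Om J = J 0 o J 1 o J 2 o J 3 o J 4 o J 5 o J 6 o J 7" by (auto simp: Om_def)
  thus ?thesis by (simp add: l linear_compose)
qed

lemma Om_selfadj:
  assumes ad: "admissible 4 4 J g" shows "g (Om J u) v = g u (Om J v)"
proof -
  have A: "clifford_rep 4 4 J \<and> scalar_product g \<and> (\<forall>k<4+4. \<forall>u v. g (J k u) v = - g u (J k v))"
    using ad unfolding admissible_def .
  have cl: "clifford_rep 4 4 J" and sk: "\<And>k u v. k < 4+4 \<Longrightarrow> g (J k u) v = - g u (J k v)"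
    and sp: "bilinear g" using A unfolding scalar_product_def by blast+
  show ?thesis unfolding Om_def
    by (simp add: sk bilinear_rneg[OF sp] cl_neg[OF cl] cl_anti[OF cl] cl_sq[OF cl])
qed

lemma Om_perm:
  assumes cl: "clifford_rep 4 4 J" and perm: "\<forall>j<8. permutes_up_to_sign (J j) B" and b: "b \<in> B"
  shows "\<exists>b'\<in>B. Om J b = b' \<or> Om J b = - b'"
proof -
  let ?P = "\<lambda>x. \<exists>b'\<in>B. x = b' \<or> x = - b'"
  have step: "?P (J j x)" if P1: "?P x" and j8: "j < 8" for j x
  proof -
    obtain b' where b': "b' \<in> B" "x = b' \<or> x = - b'" using P1 by blast
    obtain c where c: "c \<in> B" "J j b' = c \<or> J j b' = - c"
      using perm j8 b'(1) unfolding permutes_up_to_sign_def by blast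
    have "J j (- b') = - J j b'" using cl j8 by (simp add: cl_neg)
    thus ?thesis using b' c by auto
  qed
  have "?P b" using b by blast
  thus ?thesis unfolding Om_def by (intro step) simp_all
qed
lemma bil_compL:
  assumes "bilinear g" "linear A" shows "bilinear (\<lambda>x y. g (A x) y)"
  using assms unfolding bilinear_def
  by (auto intro: linear_compose[of A "\<lambda>x. g x _", unfolded o_def])

lemma bil_negR:
  assumes "bilinear g" "linear A" shows "bilinear (\<lambda>x y. - g x (A y))"
  using assms unfolding bilinear_def
  by (auto intro!: linear_compose_neg intro: linear_compose[of A "g _", unfolded o_def])

lemma val3: "integral_basis p q J g B \<Longrightarrow> a\<in>B \<Longrightarrow> b\<in>B \<Longrightarrow> g a b \<in> {1,-1,0}"
  unfolding integral_basis_def by (cases "a = b") auto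

lemma mult3: "(x::real) \<in> {1,-1,0} \<Longrightarrow> y \<in> {1,-1,0} \<Longrightarrow> x*y \<in> {1,-1,0}"
  by auto

lemma tensor_zeroL: "tensor 0 u = 0" by (simp add: vec_eq_iff tensor_def)
lemma tensor_zeroR: "tensor v 0 = 0" by (simp add: vec_eq_iff tensor_def)

lemma tensor_span_basis:
  assumes spV: "span BV = UNIV" and spU: "span BU = UNIV"
  shows "span {tensor a b | a b. a \<in> BV \<and> b \<in> BU} = (UNIV :: (real^('n::finite \<times> 'm::finite)) set)"
proof -
  let ?B = "{tensor a b | a b. a \<in> BV \<and> b \<in> BU} :: (real^('n \<times> 'm)) set"
  have 1: "tensor v b \<in> span ?B" if b: "b \<in> BU" for v :: "real^'n" and b
  proof -
    have "v \<in> span BV" using spV by simp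
    thus ?thesis
    proof (rule span_induct)
      show "subspace {v. tensor v b \<in> span ?B}"
        unfolding subspace_def
        by (simp add: tensor_zeroL tensor_addL tensor_scaleL span_zero span_add span_scale)
      show "tensor a b \<in> span ?B" if "a \<in> BV" for a
        using that b by (intro span_base) blast
    qed
  qed
  have 2: "tensor v u \<in> span ?B" for v :: "real^'n" and u :: "real^'m"
  proof -
    have "u \<in> span BU" using spU by simp
    thus ?thesis
    proof (rule span_induct)
      show "subspace {u. tensor v u \<in> span ?B}"
        unfolding subspace_def
        by (simp add: tensor_zeroR tensor_addR tensor_scaleR span_zero span_add span_scale)
    qed (rule 1)
  qed
  have "{tensor v u | v u. True} \<subseteq> span ?B" using 2 by blast
  hence "span {tensor v u | v u. True} \<subseteq> span ?B" by (simp add: span_subspace_induct span_minimal)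
  thus ?thesis using tensor_span by auto
qed

theorem theorem7p3:
  fixes r s :: nat
    and JV :: "nat \<Rightarrow> real^'n \<Rightarrow> real^'n" and gV :: "real^'n \<Rightarrow> real^'n \<Rightarrow> real"
    and JU :: "nat \<Rightarrow> real^'m \<Rightarrow> real^'m" and gU :: "real^'m \<Rightarrow> real^'m \<Rightarrow> real"
    and BU :: "(real^'m) set"
    and g :: "real^('n \<times> 'm) \<Rightarrow> real^('n \<times> 'm) \<Rightarrow> real"
  assumes V: "admissible_integral r s JV gV"
    and U: "admissible 4 4 JU gU"
    and BU: "integral_basis 4 4 JU gU BU"
    and perm: "\<forall>j<8. permutes_up_to_sign (JU j) BU"
    and g_bil: "bilinear g"
    and g_tensor: "\<forall>v v' u u'. g (tensor v u) (tensor v' u') = gV v v' * gU u u'"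
  shows "\<exists>J. admissible_integral (r + 4) (s + 4) J g"
proof -
  obtain BV where BV: "integral_basis r s JV gV BV" using V unfolding admissible_integral_def by blast
  have adV: "admissible r s JV gV" using V unfolding admissible_integral_def by blast
  have AV: "clifford_rep r s JV \<and> scalar_product gV \<and> (\<forall>k<r+s. \<forall>u v. gV (JV k u) v = - gV u (JV k v))"
    using adV unfolding admissible_def .
  have AU: "clifford_rep 4 4 JU \<and> scalar_product gU \<and> (\<forall>k<4+4. \<forall>u v. gU (JU k u) v = - gU u (JU k v))"
    using U unfolding admissible_def .
  have clV: "clifford_rep r s JV" and clU: "clifford_rep 4 4 JU" using AV AU by blast+
  have skV: "\<And>k u v. k < r+s \<Longrightarrow> gV (JV k u) v = - gV u (JV k v)" using AV by blast
  have skU: "\<And>k u v. k < 4+4 \<Longrightarrow> gU (JU k u) v = - gU u (JU k v)" using AU by blast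
  have bgV: "bilinear gV" and bgU: "bilinear gU" using AV AU unfolding scalar_product_def by blast+
  have symV: "\<And>x y. gV x y = gV y x" and symU: "\<And>x y. gU x y = gU y x"
    using AV AU unfolding scalar_product_def by blast+
  have CV: "(\<forall>k<r+s. linear (JV k)) \<and> (\<forall>k<r+s. \<forall>v. JV k (JV k v) = - (gen_norm r k *\<^sub>R v)) \<and>
     (\<forall>k<r+s. \<forall>l<r+s. k \<noteq> l \<longrightarrow> (\<forall>v. JV k (JV l v) = - JV l (JV k v)))"
    using clV unfolding clifford_rep_def .
  have CU: "(\<forall>k<4+4. linear (JU k)) \<and> (\<forall>k<4+4. \<forall>v. JU k (JU k v) = - (gen_norm 4 k *\<^sub>R v)) \<and>
     (\<forall>k<4+4. \<forall>l<4+4. k \<noteq> l \<longrightarrow> (\<forall>v. JU k (JU l v) = - JU l (JU k v)))"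
    using clU unfolding clifford_rep_def .
  have linV: "\<And>k. k < r+s \<Longrightarrow> linear (JV k)" using CV by blast
  have linU: "\<And>k. k < 4+4 \<Longrightarrow> linear (JU k)" using CU by blast
  have sqV: "\<And>k v. k < r+s \<Longrightarrow> JV k (JV k v) = - (gen_norm r k *\<^sub>R v)" using CV by blast
  have sqU: "\<And>k v. k < 4+4 \<Longrightarrow> JU k (JU k v) = - (gen_norm 4 k *\<^sub>R v)" using CU by blast
  have acV: "\<And>k l v. k < r+s \<Longrightarrow> l < r+s \<Longrightarrow> k \<noteq> l \<Longrightarrow> JV k (JV l v) = - JV l (JV k v)"
    using CV by blast
  have acU: "\<And>k l v. k < 4+4 \<Longrightarrow> l < 4+4 \<Longrightarrow> k \<noteq> l \<Longrightarrow> JU k (JU l v) = - JU l (JU k v)"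
    using CU by blast
  have negV: "\<And>k v. k < r+s \<Longrightarrow> JV k (- v) = - JV k v" using linV linear_neg by blast
  define Q where "Q = Om JU"
  have linQ: "linear Q" unfolding Q_def by (rule Om_linear[OF clU])
  have sqQ: "\<And>u. Q (Q u) = u" unfolding Q_def by (rule Om_sq[OF clU])
  have acQ: "\<And>j u. j < 4+4 \<Longrightarrow> Q (JU j u) = - JU j (Q u)" unfolding Q_def using Om_anti[OF clU] by simp
  have saQ: "\<And>u v. gU (Q u) v = gU u (Q v)" unfolding Q_def by (rule Om_selfadj[OF U])
  have permQ: "\<And>b. b \<in> BU \<Longrightarrow> \<exists>b'\<in>BU. Q b = b' \<or> Q b = - b'" unfolding Q_def
    by (rule Om_perm[OF clU perm])
  define isV where "isV k \<longleftrightarrow> k < r \<or> (r+4 \<le> k \<and> k < r+4+s)" for k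
  define vi where "vi k = (if k < r then k else k - 4)" for k
  define ui where "ui k = (if k < r+4 then k - r else k - r - s)" for k
  define J where "J k = (if isV k then tmap (JV (vi k)) Q else tmap id (JU (ui k)))" for k
  define N where "N = (r+4)+(s+4)"
  have Vk: "\<And>k. k < N \<Longrightarrow> isV k \<Longrightarrow> vi k < r+s \<and> gen_norm (r+4) k = gen_norm r (vi k)"
    by (auto simp: N_def isV_def vi_def gen_norm_def)
  have Uk: "\<And>k. k < N \<Longrightarrow> \<not> isV k \<Longrightarrow> ui k < 4+4 \<and> gen_norm (r+4) k = gen_norm 4 (ui k)"
    by (auto simp: N_def isV_def ui_def gen_norm_def)
  have Vinj: "\<And>k l. isV k \<Longrightarrow> isV l \<Longrightarrow> k \<noteq> l \<Longrightarrow> vi k \<noteq> vi l"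
    by (auto simp: isV_def vi_def)
  have Uinj: "\<And>k l. k < N \<Longrightarrow> l < N \<Longrightarrow> \<not> isV k \<Longrightarrow> \<not> isV l \<Longrightarrow> k \<noteq> l \<Longrightarrow> ui k \<noteq> ui l"
    by (auto simp: N_def isV_def ui_def)
  have JVt: "J k (tensor v u) = tensor (JV (vi k) v) (Q u)" if "k < N" "isV k" for k v u
  proof -
    have "vi k < r+s" using Vk that by blast
    thus ?thesis using that by (simp add: J_def tmap_tensor[OF linV linQ])
  qed
  have JUt: "J k (tensor v u) = tensor v (JU (ui k) u)" if "k < N" "\<not> isV k" for k v u
  proof -
    have "ui k < 4+4" using Uk that by blast
    thus ?thesis using that by (simp add: J_def tmap_tensor[OF linear_id linU])
  qed
  have linJ: "\<And>k. linear (J k)" by (simp add: J_def linear_tmap)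
  have linneg: "\<And>c. linear (\<lambda>x::real^('n\<times>'m). - (c *\<^sub>R x))"
    by (rule linearI) (simp_all add: scaleR_add_right)

  have clJ: "clifford_rep (r+4) (s+4) J"
    unfolding clifford_rep_def
  proof (intro conjI allI impI)
    fix k assume k: "k < r+4+(s+4)"
    show "linear (J k)" by (rule linJ)
    fix x
    have "J k o J k = (\<lambda>x. - (gen_norm (r+4) k *\<^sub>R x))"
    proof (rule linear_eq_tensor[OF linear_compose[OF linJ linJ] linneg])
      fix v u
      show "(J k o J k) (tensor v u) = - (gen_norm (r+4) k *\<^sub>R tensor v u)"
      proof (cases "isV k")
        case True
        with k Vk have i: "vi k < r+s" and gn: "gen_norm (r+4) k = gen_norm r (vi k)" by (auto simp: N_def)
        have "(J k o J k) (tensor v u) = tensor (JV (vi k) (JV (vi k) v)) (Q (Q u))"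
          using JVt k True by (simp add: N_def)
        also have "\<dots> = - (gen_norm (r+4) k *\<^sub>R tensor v u)"
          by (simp only: sqV[OF i] sqQ gn tensor_negL tensor_scaleL)
        finally show ?thesis .
      next
        case False
        with k Uk have i: "ui k < 4+4" and gn: "gen_norm (r+4) k = gen_norm 4 (ui k)" by (auto simp: N_def)
        have "(J k o J k) (tensor v u) = tensor v (JU (ui k) (JU (ui k) u))"
          using JUt k False by (simp add: N_def)
        also have "\<dots> = - (gen_norm (r+4) k *\<^sub>R tensor v u)"
          by (simp only: sqU[OF i] gn tensor_negR tensor_scaleR)
        finally show ?thesis .
      qed
    qed
    thus "J k (J k x) = - (gen_norm (r+4) k *\<^sub>R x)" by (metis comp_apply)
  next
    fix k l x assume k: "k < r+4+(s+4)" and l: "l < r+4+(s+4)" and kl: "k \<noteq> l"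
    have "J k o J l = (\<lambda>x. - ((J l o J k) x))"
    proof (rule linear_eq_tensor[OF linear_compose[OF linJ linJ] linear_compose_neg[OF linear_compose[OF linJ linJ]]])
      fix v u
      show "(J k o J l) (tensor v u) = - ((J l o J k) (tensor v u))"
      proof (cases "isV k"; cases "isV l")
        assume a: "isV k" "isV l"
        with k l Vk have i: "vi k < r+s" "vi l < r+s" by (auto simp: N_def)
        have ne: "vi k \<noteq> vi l" using Vinj a kl by blast
        show ?thesis using JVt k l a by (simp add: N_def sqQ acV[OF i ne] tensor_negL)
      next
        assume a: "isV k" "\<not> isV l"
        with k l Vk Uk have i: "vi k < r+s" "ui l < 4+4" by (auto simp: N_def)
        show ?thesis using JVt JUt k l a by (simp add: N_def acQ[OF i(2)] negV[OF i(1)] tensor_negR)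
      next
        assume a: "\<not> isV k" "isV l"
        with k l Vk Uk have i: "ui k < 4+4" "vi l < r+s" by (auto simp: N_def)
        show ?thesis using JVt JUt k l a by (simp add: N_def acQ[OF i(1)] negV[OF i(2)] tensor_negR)
      next
        assume a: "\<not> isV k" "\<not> isV l"
        with k l Uk have i: "ui k < 4+4" "ui l < 4+4" by (auto simp: N_def)
        have ne: "ui k \<noteq> ui l" using Uinj a kl k l by (simp add: N_def)
        show ?thesis using JUt k l a by (simp add: N_def acU[OF i ne] tensor_negR)
      qed
    qed
    thus "J k (J l x) = - J l (J k x)" by (metis comp_apply)
  qed
  have skJ: "\<forall>k<r+4+(s+4). \<forall>x y. g (J k x) y = - g x (J k y)"
  proof (intro allI impI)
    fix k x y assume k: "k < r+4+(s+4)"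
    have "(\<lambda>x y. g (J k x) y) = (\<lambda>x y. - g x (J k y))"
    proof (rule bilinear_eq_tensor[OF bil_compL[OF g_bil linJ] bil_negR[OF g_bil linJ]])
      fix v u v' u'
      show "g (J k (tensor v u)) (tensor v' u') = - g (tensor v u) (J k (tensor v' u'))"
      proof (cases "isV k")
        case True
        with k Vk have i: "vi k < r+s" by (auto simp: N_def)
        show ?thesis using k True by (simp add: JVt N_def g_tensor skV[OF i] saQ)
      next
        case False
        with k Uk have i: "ui k < 4+4" by (auto simp: N_def)
        show ?thesis using k False by (simp add: JUt N_def g_tensor skU[OF i])
      qed
    qed
    thus "g (J k x) y = - g x (J k y)" by metis
  qed
  have IV: "independent BV \<and> span BV = UNIV \<and> (\<forall>a\<in>BV. \<forall>b\<in>BV. a \<noteq> b \<longrightarrow> gV a b = 0) \<and>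
     (\<forall>a\<in>BV. gV a a = 1 \<or> gV a a = -1) \<and> (\<forall>k<r+s. \<forall>a\<in>BV. \<forall>b\<in>BV. gV (JV k a) b \<in> {1, -1, 0})"
    using BV unfolding integral_basis_def .
  have IU: "independent BU \<and> span BU = UNIV \<and> (\<forall>a\<in>BU. \<forall>b\<in>BU. a \<noteq> b \<longrightarrow> gU a b = 0) \<and>
     (\<forall>a\<in>BU. gU a a = 1 \<or> gU a a = -1) \<and> (\<forall>k<4+4. \<forall>a\<in>BU. \<forall>b\<in>BU. gU (JU k a) b \<in> {1, -1, 0})"
    using BU unfolding integral_basis_def .
  define B where "B = {tensor a b | a b. a \<in> BV \<and> b \<in> BU}"
  have spB: "span B = UNIV" unfolding B_def by (rule tensor_span_basis) (use IV IU in blast)+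
  have gB: "\<And>a b a' b'. g (tensor a b) (tensor a' b') = gV a a' * gU b b'" using g_tensor by blast
  have orthB: "\<forall>x\<in>B. \<forall>y\<in>B. x \<noteq> y \<longrightarrow> g x y = 0"
  proof (intro ballI impI)
    fix x y assume "x \<in> B" "y \<in> B" "x \<noteq> y"
    then obtain a b a' b' where ab: "x = tensor a b" "y = tensor a' b'" "a \<in> BV" "b \<in> BU" "a' \<in> BV" "b' \<in> BU"
      unfolding B_def by blast
    with \<open>x \<noteq> y\<close> have "a \<noteq> a' \<or> b \<noteq> b'" by blast
    thus "g x y = 0"
    proof
      assume "a \<noteq> a'" hence "gV a a' = 0" using IV ab by blast
      thus ?thesis by (simp add: ab gB)
    next
      assume "b \<noteq> b'" hence "gU b b' = 0" using IU ab by blast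
      thus ?thesis by (simp add: ab gB)
    qed
  qed
  have nB: "\<forall>x\<in>B. g x x = 1 \<or> g x x = -1"
  proof
    fix x assume "x \<in> B"
    then obtain a b where ab: "x = tensor a b" "a \<in> BV" "b \<in> BU" unfolding B_def by blast
    have "gV a a = 1 \<or> gV a a = -1" "gU b b = 1 \<or> gU b b = -1" using IV IU ab by blast+
    thus "g x x = 1 \<or> g x x = -1" by (auto simp: ab gB)
  qed
  have nzB: "\<forall>x\<in>B. g x x \<noteq> 0" using nB by force
  have symB: "\<forall>x\<in>B. \<forall>y\<in>B. g x y = g y x"
  proof (intro ballI)
    fix x y assume "x \<in> B" "y \<in> B"
    then obtain a b a' b' where ab: "x = tensor a b" "y = tensor a' b'"
      unfolding B_def by blast
    show "g x y = g y x" unfolding ab gB using symV[of a a'] symU[of b b'] by simp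
  qed
  have scal: "scalar_product g"
    unfolding scalar_product_def
  proof (intro conjI allI impI)
    show "bilinear g" by (rule g_bil)
    fix x y show "g x y = g y x" by (rule sym_span[OF g_bil symB spB])
  next
    fix x assume "\<forall>v. g x v = 0"
    thus "x = 0" by (rule ortho_nondeg[OF g_bil orthB nzB spB])
  qed
  have intB: "\<forall>k<r+4+(s+4). \<forall>x\<in>B. \<forall>y\<in>B. g (J k x) y \<in> {1, -1, 0}"
  proof (intro allI impI ballI)
    fix k x y assume k: "k < r+4+(s+4)" and "x \<in> B" "y \<in> B"
    then obtain a b a' b' where ab: "x = tensor a b" "y = tensor a' b'" "a \<in> BV" "b \<in> BU" "a' \<in> BV" "b' \<in> BU"
      unfolding B_def by blast
    show "g (J k x) y \<in> {1, -1, 0}"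
    proof (cases "isV k")
      case True
      with k Vk have i: "vi k < r+s" by (auto simp: N_def)
      have e: "g (J k x) y = gV (JV (vi k) a) a' * gU (Q b) b'"
        using k True by (simp add: ab JVt N_def gB)
      have 1: "gV (JV (vi k) a) a' \<in> {1,-1,0}" using IV i ab by blast
      obtain c where c: "c \<in> BU" "Q b = c \<or> Q b = - c" using permQ ab by blast
      have c3: "gU c b' \<in> {1,-1,0}" by (rule val3[OF BU c(1) ab(6)])
      have 2: "gU (Q b) b' \<in> {1,-1,0}"
        using c(2) c3 by (auto simp: bilinear_lneg[OF bgU])
      show ?thesis unfolding e by (rule mult3[OF 1 2])
    next
      case False
      with k Uk have i: "ui k < 4+4" by (auto simp: N_def)
      have e: "g (J k x) y = gV a a' * gU (JU (ui k) b) b'"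
        using k False by (simp add: ab JUt N_def gB)
      have 1: "gV a a' \<in> {1,-1,0}" by (rule val3[OF BV ab(3) ab(5)])
      have 2: "gU (JU (ui k) b) b' \<in> {1,-1,0}" using IU i ab by blast
      show ?thesis unfolding e by (rule mult3[OF 1 2])
    qed
  qed
  have "integral_basis (r+4) (s+4) J g B"
    unfolding integral_basis_def
    using ortho_independent[OF g_bil orthB nzB] spB orthB nB intB by blast
  moreover have "admissible (r+4) (s+4) J g"
    unfolding admissible_def using clJ scal skJ by blast
  ultimately show ?thesis unfolding admissible_integral_def by blast
qed

end
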